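(* For every integer $m\ge 0$ and every integer $n\ge 0$, $$x^n=\sum_{k=0}^{\lfloor n/2\rfloor}\frac{n!}{k!\,(n-2k)!}\,\frac{(n+m-2k)!}{(n+m-k)!}\,(-s)^k\, l_{n-2k}(x,m,s).$$ Consequently, if $\Lambda_m$ denotes the linear functional on polynomials in $x$ (with coefficients rational functions of $s$) determined by $\Lambda_m(l_n(x,m,s))=[n=0]$ for all $n\ge 0$, then $\Lambda_m(x^{2n+1})=0$ and $$\Lambda_m(x^{2n})=(-s)^n\,\sigma(m,n)=(-s)^n\frac{(2n)!\,m!}{n!\,(m+n)!}\quad\text{for all } n\ge 0.$$
   Context: For an integer $m\ge 0$ and indeterminates $x,s$, $$l_n(x,m,s)=\sum_{k=0}^{\lfloor n/2\rfloor}\frac{n!}{k!\,(n-2k)!}\,\frac{1}{\prod_{j=1}^{k}(m+n-j)}\,s^k x^{n-2k}\qquad(n\ge 0),$$ empty products being $1$. The normalized super Catalan numbers are $\sigma(m,n)=\frac{(2n)!\,m!}{n!\,(n+m)!}$. $[P]$ is the Iverson bracket. *)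

theory Defs
  imports "HOL-Computational_Algebra.Polynomial"
begin

text \<open>The polynomial l_n(x,m,s) in the variable x, with s an element of a field of
  characteristic 0 (e.g. the field of rational functions in s).\<close>
definition lpoly :: "nat \<Rightarrow> nat \<Rightarrow> 'a::field_char_0 \<Rightarrow> 'a poly" where
  "lpoly n m s = (\<Sum>k\<le>n div 2.
      smult (fact n / (fact k * fact (n - 2*k)) / (\<Prod>j=1..k. of_nat (m + n - j)) * s ^ k)
            ([:0, 1:] ^ (n - 2*k)))"

definition sigma :: "nat \<Rightarrow> nat \<Rightarrow> 'a::field_char_0" where
  "sigma m n = fact (2*n) * fact m / (fact n * fact (n + m))"

end

theory Submission imports Defs begin

lemma binom_tele:
  fixes f :: "nat \<Rightarrow> 'a::comm_ring_1"
  shows "(\<Sum>k\<le>Suc q. (-1)^k * of_nat (Suc q choose k) * f k)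
       = (\<Sum>k\<le>q. (-1)^k * of_nat (q choose k) * (f k - f (Suc k)))"
proof -
  have "(\<Sum>k\<le>Suc q. (-1)^k * of_nat (Suc q choose k) * f k)
      = f 0 + (\<Sum>k\<le>q. (-1)^(Suc k) * of_nat (Suc q choose Suc k) * f (Suc k))"
    by (subst sum.atMost_Suc_shift) simp
  also have "\<dots> = f 0 - (\<Sum>k\<le>q. (-1)^k * of_nat (q choose k) * f (Suc k))
                        - (\<Sum>k\<le>q. (-1)^k * of_nat (q choose Suc k) * f (Suc k))"
    by (simp add: sum.distrib sum_subtractf algebra_simps sum_negf)
  also have "f 0 = (\<Sum>k\<le>q. (-1)^k * of_nat (q choose k) * f k)
      - (\<Sum>k\<le>q. (-1)^(Suc k) * of_nat (q choose Suc k) * f (Suc k))" (is "_ = ?S - ?T")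
  proof -
  have "?S = f 0 + (\<Sum>k\<le>q. (-1)^(Suc k) * of_nat (q choose Suc k) * f (Suc k))"
  proof (cases q)
    case 0 then show ?thesis by simp
  next
    case (Suc q')
    have "(\<Sum>k\<le>q. (-1)^k * of_nat (q choose k) * f k)
      = f 0 + (\<Sum>k\<le>q'. (-1)^(Suc k) * of_nat (q choose Suc k) * f (Suc k))"
      unfolding Suc by (subst sum.atMost_Suc_shift) simp
    also have "(\<Sum>k\<le>q'. (-1)^(Suc k) * of_nat (q choose Suc k) * f (Suc k))
       = (\<Sum>k\<le>q. (-1)^(Suc k) * of_nat (q choose Suc k) * f (Suc k))"
      unfolding Suc by (simp add: binomial_eq_0)
    finally show ?thesis .
  qed
  then show ?thesis by simp
  qed
  also have "\<dots> - (\<Sum>k\<le>q. (-1)^k * of_nat (q choose k) * f (Suc k))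
                        - (\<Sum>k\<le>q. (-1)^k * of_nat (q choose Suc k) * f (Suc k))
     = (\<Sum>k\<le>q. (-1)^k * of_nat (q choose k) * f k) - (\<Sum>k\<le>q. (-1)^k * of_nat (q choose k) * f (Suc k))"
    by (simp add: sum_negf)
  also have "\<dots> = (\<Sum>k\<le>q. (-1)^k * of_nat (q choose k) * (f k - f (Suc k)))"
    by (simp add: sum_subtractf right_diff_distrib)
  finally show ?thesis .
qed

lemma Adiff:
  fixes N k q :: nat
  assumes "k \<le> q" "2*Suc q \<le> N"
  shows "(fact (N-k-Suc q)/fact (N-k) :: 'a::field_char_0) - fact (N-Suc k-Suc q)/fact (N-Suc k)
       = - of_nat (Suc q) * (fact (N-k-Suc q-1)/fact(N-k))"
proof -
  define L where "L = N - k - Suc q - 1"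
  have L: "N = L + Suc q + 1 + k" using assms unfolding L_def by arith
  have e1: "N-k-Suc q = Suc L" "N-k = Suc (L + Suc q)" "N - Suc k - Suc q = L" "N - Suc k = L + Suc q"
     "N-k-Suc q-1 = L" using L by auto
  show ?thesis unfolding e1
    by (simp add: field_simps fact_Suc del: of_nat_Suc) (simp add: algebra_simps)
qed

lemma core:
  fixes N q :: nat
  assumes "2*Suc q \<le> N"
  shows "(\<Sum>k\<le>Suc q. (-1)^k * (of_nat (Suc q choose k) * (fact (N-k-Suc q)/fact (N-k))
      + of_nat (Suc q) * of_nat (q choose k) * (fact (N-k-Suc q-1)/fact(N-k)))) = (0::'a::field_char_0)"
proof -
  define A where "A k = (fact (N-k-Suc q)/fact (N-k) :: 'a)" for k
  define B where "B k = (fact (N-k-Suc q-1)/fact (N-k) :: 'a)" for k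
  have "(\<Sum>k\<le>Suc q. (-1)^k * of_nat (Suc q choose k) * A k)
      = (\<Sum>k\<le>q. (-1)^k * of_nat (q choose k) * (A k - A (Suc k)))"
    by (rule binom_tele)
  also have "\<dots> = (\<Sum>k\<le>q. (-1)^k * of_nat (q choose k) * (- of_nat (Suc q) * B k))"
  proof (rule sum.cong[OF refl])
    fix k assume "k \<in> {..q}"
    then have "A k - A (Suc k) = - of_nat (Suc q) * B k"
      unfolding A_def B_def using Adiff[of k q N] assms by simp
    then show "(-1)^k * of_nat (q choose k) * (A k - A (Suc k)) = (-1)^k * of_nat (q choose k) * (- of_nat (Suc q) * B k)"
      by simp
  qed
  also have "\<dots> = - of_nat (Suc q) * (\<Sum>k\<le>Suc q. (-1)^k * of_nat (q choose k) * B k)"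
    by (simp add: sum_distrib_left algebra_simps binomial_eq_0)
  finally have eq: "(\<Sum>k\<le>Suc q. (-1)^k * of_nat (Suc q choose k) * A k) = - of_nat (Suc q) * (\<Sum>k\<le>Suc q. (-1)^k * of_nat (q choose k) * B k)" .
  have "(\<Sum>k\<le>Suc q. (-1)^k * (of_nat (Suc q choose k) * A k + of_nat (Suc q) * of_nat (q choose k) * B k))
     = (\<Sum>k\<le>Suc q. (-1)^k * of_nat (Suc q choose k) * A k) + of_nat (Suc q) * (\<Sum>k\<le>Suc q. (-1)^k * of_nat (q choose k) * B k)"
    by (simp add: sum.distrib sum_distrib_left ring_distribs mult_ac)
  also have "\<dots> = 0" unfolding eq by (simp only: mult_minus_left add.left_inverse)
  finally show ?thesis unfolding A_def B_def .
qed


lemma prodP: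
  "j < a \<Longrightarrow> (\<Prod>i=1..j. of_nat (a - i) :: 'a::field_char_0) = fact (a - 1) / fact (a - 1 - j)"
proof (induction j)
  case 0 then show ?case by simp
next
  case (Suc j)
  have e: "a - 1 - j = Suc (a - 1 - Suc j)" using Suc.prems by simp
  have e2: "a - Suc j = a - 1 - j" by simp
  have "(\<Prod>i=1..Suc j. of_nat (a - i) :: 'a) = (\<Prod>i=1..j. of_nat (a - i)) * of_nat (a - Suc j)"
    by (simp add: prod.cl_ivl_Suc)
  also have "\<dots> = fact (a - 1) / fact (a - 1 - j) * of_nat (a - 1 - j)"
    using Suc by (simp only: e2)
  also have "\<dots> = fact (a - 1) / fact (a - 1 - Suc j)"
    unfolding e fact_Suc by (simp add: divide_simps del: of_nat_Suc)
  finally show ?case .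
qed


lemma alg:
  fixes fn fk f2 ft FA FL Fak fj fkj J KJ M S1 S T :: "'a::field"
  assumes "fk\<noteq>0" "f2\<noteq>0" "ft\<noteq>0" "FA\<noteq>0" "FL\<noteq>0" "Fak\<noteq>0" "fj\<noteq>0" "fkj\<noteq>0" "J\<noteq>0" "KJ\<noteq>0"
  shows "fn / (fk * f2) * ((M + J) * FA / Fak) * (S1 * S) * (f2 / (J * fj * ft) / (FA / FL) * T)
    = S1 * (S * T) * (fn / (KJ * fkj * ft)) * (KJ * fkj / (fk * (J * fj)) * (M * FL / Fak) + KJ * (fkj / (fk * fj)) * (FL / Fak))"
  using assms by (simp add: field_simps)

lemma termeq:
  fixes s :: "'a::field_char_0"
  assumes n: "n = 2*(k+j)+t"
  shows "fact n / (fact k * fact (n - 2*k)) * (fact (n + m - 2*k) / fact (n + m - k)) * (-s)^k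
     * (fact (n-2*k) / (fact j * fact (n-2*k - 2*j)) / (\<Prod>i=1..j. of_nat (m + (n-2*k) - i)) * s^j)
   = (-1)^k * s^(k+j) * (fact n/(fact (k+j) * fact t)) * (of_nat ((k+j) choose k) * (fact (n+m-k-(k+j))/fact (n+m-k))
       + of_nat (k+j) * of_nat ((k+j-1) choose k) * (fact (n+m-k-(k+j)-1)/fact (n+m-k)))"
proof (cases j)
  case 0
  have e: "n - 2*k = t" "n+m-2*k = m+t" "n+m-k = m+t+k" "n+m-k-(k+0) = m+t" using n 0 by auto
  have pm: "(-s)^k = (-1)^k * s^k" by (simp flip: power_mult_distrib)
  have z: "of_nat k * of_nat (k - Suc 0 choose k) = (0::'a)" by (cases k) auto
  show ?thesis unfolding 0 e pm
    by (simp add: z field_simps)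
next
  case (Suc j')
  have pm: "(-s)^k = (-1)^k * s^k" by (simp flip: power_mult_distrib)
  define a where "a = m + 2*j + t"
  have e: "n - 2*k = 2*j+t" "n+m-2*k = a" "n+m-k = a+k" "a+k-(k+j) = m+j+t"
     "m+j+t-1 = m+j'+t" "2*j+t-2*j = t" "m + (2*j+t) = a" "k+j-1 = k+j'"
    using n Suc unfolding a_def by auto
  have p: "(\<Prod>i=1..j. of_nat (a - i) :: 'a) = fact (a - 1) / fact (m+j'+t)"
  proof -
    have aj: "j < a" "a - 1 - j = m+j'+t" using Suc unfolding a_def by auto
    show ?thesis by (simp only: prodP[OF aj(1)] aj(2))
  qed
  have fa: "(fact a :: 'a) = of_nat a * fact (a - 1)" using Suc unfolding a_def by (simp add: fact_reduce)
  have fb: "(fact (m+j+t) :: 'a) = of_nat (m+j+t) * fact (m+j'+t)" using Suc by simp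
  have fj: "(fact j :: 'a) = of_nat j * fact j'" using Suc by simp
  have bc1: "(of_nat ((k+j) choose k) :: 'a) = fact (k+j) / (fact k * fact j)"
    by (subst binomial_fact) auto
  have bc2: "(of_nat ((k+j') choose k) :: 'a) = fact (k+j') / (fact k * fact j')"
    by (subst binomial_fact) auto
  have fkj: "(fact (k+j) :: 'a) = of_nat (k+j) * fact (k+j')" using Suc by simp
  have aeq: "of_nat a = (of_nat (m+j+t) + of_nat j :: 'a)" unfolding a_def by simp
  have a1: "(of_nat (k+j)::'a) \<noteq> 0" "(of_nat j::'a) \<noteq> 0"
  proof -
    have kj: "k+j \<noteq> 0" "j \<noteq> 0" using Suc by auto
    show "(of_nat (k+j)::'a) \<noteq> 0" "(of_nat j::'a) \<noteq> 0" using kj by (metis of_nat_eq_0_iff)+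
  qed
  show ?thesis unfolding e p bc1 bc2 fa fb
    apply (simp only: fj fkj pm aeq power_add)
    apply (rule alg)
    apply (simp_all only: a1 fact_nonzero not_False_eq_True)
    done
qed


lemma coeffsum:
  fixes s :: "'a::field_char_0"
  assumes "2*r \<le> n"
  shows "(\<Sum>k\<le>r. fact n / (fact k * fact (n - 2*k)) * (fact (n + m - 2*k) / fact (n + m - k)) * (-s)^k
     * (fact (n-2*k) / (fact (r-k) * fact (n-2*k - 2*(r-k))) / (\<Prod>i=1..r-k. of_nat (m + (n-2*k) - i)) * s^(r-k)))
   = (if r = 0 then 1 else 0)"
proof (cases r)
  case 0 then show ?thesis by simp
next
  case (Suc q)
  define K where "K = (fact n / (fact r * fact (n - 2*r)) :: 'a)"
  have "(\<Sum>k\<le>r. fact n / (fact k * fact (n - 2*k)) * (fact (n + m - 2*k) / fact (n + m - k)) * (-s)^k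
     * (fact (n-2*k) / (fact (r-k) * fact (n-2*k - 2*(r-k))) / (\<Prod>i=1..r-k. of_nat (m + (n-2*k) - i)) * s^(r-k)))
    = (\<Sum>k\<le>Suc q. s^r * K * ((-1)^k * (of_nat (Suc q choose k) * (fact (n+m-k-Suc q)/fact (n+m-k))
      + of_nat (Suc q) * of_nat (q choose k) * (fact (n+m-k-Suc q-1)/fact(n+m-k)))))"
  proof (rule sum.cong)
    show "{..r} = {..Suc q}" using Suc by simp
  next
    fix k assume "k \<in> {..Suc q}"
    then have kr: "k + (r-k) = Suc q" "k \<le> r" using Suc by auto
    have nn: "n = 2*(k+(r-k)) + (n - 2*r)" using assms kr by simp
    note T = termeq[OF nn, of m s]
    show "fact n / (fact k * fact (n - 2*k)) * (fact (n + m - 2*k) / fact (n + m - k)) * (-s)^k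
     * (fact (n-2*k) / (fact (r-k) * fact (n-2*k - 2*(r-k))) / (\<Prod>i=1..r-k. of_nat (m + (n-2*k) - i)) * s^(r-k))
      = s^r * K * ((-1)^k * (of_nat (Suc q choose k) * (fact (n+m-k-Suc q)/fact (n+m-k))
      + of_nat (Suc q) * of_nat (q choose k) * (fact (n+m-k-Suc q-1)/fact(n+m-k))))"
      unfolding T unfolding kr(1) unfolding K_def Suc by (simp add: mult_ac)
  qed
  also have "\<dots> = s^r * K * (\<Sum>k\<le>Suc q. (-1)^k * (of_nat (Suc q choose k) * (fact (n+m-k-Suc q)/fact (n+m-k))
      + of_nat (Suc q) * of_nat (q choose k) * (fact (n+m-k-Suc q-1)/fact(n+m-k))))"
    by (simp only: sum_distrib_left)
  also have "\<dots> = 0"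
  proof -
    have "2*Suc q \<le> n+m" using assms Suc by simp
    note c = core[OF this, where 'a='a]
    show ?thesis by (simp only: c mult_zero_right)
  qed
  finally show ?thesis using Suc by simp
qed


lemma smult_sum_r: "smult c (\<Sum>i\<in>A. f i) = (\<Sum>i\<in>A. smult c (f i))"
  by (induction A rule: infinite_finite_induct) (simp_all add: smult_add_right)

lemma part1:
  fixes s :: "'a::field_char_0" and m :: nat
  shows "[:0, 1:] ^ n =
            (\<Sum>k\<le>n div 2.
               smult (fact n / (fact k * fact (n - 2*k)) * (fact (n + m - 2*k) / fact (n + m - k))
                      * (- s) ^ k)
                     (lpoly (n - 2*k) m s))"
proof -
  define h where "h = n div 2"
  define c where "c k = (fact n / (fact k * fact (n - 2*k)) * (fact (n + m - 2*k) / fact (n + m - k)) * (- s) ^ k :: 'a)" for k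
  define d where "d k j = (fact (n-2*k) / (fact j * fact (n-2*k - 2*j)) / (\<Prod>i=1..j. of_nat (m + (n-2*k) - i)) * s^j :: 'a)" for k j
  have "(\<Sum>k\<le>h. smult (c k) (lpoly (n - 2*k) m s))
      = (\<Sum>k\<le>h. \<Sum>j\<le>h-k. smult (c k * d k j) ([:0,1:] ^ (n - 2*(k+j))))"
  proof (rule sum.cong[OF refl])
    fix k assume "k \<in> {..h}"
    then have e: "(n - 2*k) div 2 = h - k" "\<And>j. n - 2*k - 2*j = n - 2*(k+j)" unfolding h_def by auto
    show "smult (c k) (lpoly (n - 2*k) m s) = (\<Sum>j\<le>h-k. smult (c k * d k j) ([:0,1:] ^ (n - 2*(k+j))))"
      unfolding lpoly_def e d_def by (simp add: smult_sum_r)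
  qed
  also have "\<dots> = (\<Sum>(k,j)\<in>{(k,j). k+j \<le> h}. smult (c k * d k j) ([:0,1:] ^ (n - 2*(k+j))))"
  proof -
    have "{(k,j). k+j \<le> h} = Sigma {..h} (\<lambda>k. {..h-k})" by auto
    then show ?thesis by (simp add: sum.Sigma)
  qed
  also have "\<dots> = (\<Sum>r\<le>h. \<Sum>k\<le>r. smult (c k * d k (r-k)) ([:0,1:] ^ (n - 2*(k+(r-k)))))"
    by (rule sum.triangle_reindex_eq)
  also have "\<dots> = (\<Sum>r\<le>h. smult (\<Sum>k\<le>r. c k * d k (r-k)) ([:0,1:] ^ (n - 2*r)))"
    by (rule sum.cong[OF refl]) (simp add: smult_sum)
  also have "\<dots> = (\<Sum>r\<le>h. smult (if r = 0 then 1 else 0) ([:0,1:] ^ (n - 2*r)))"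
  proof (rule sum.cong[OF refl])
    fix r assume "r \<in> {..h}"
    then have "2*r \<le> n" unfolding h_def by auto
    note cs = coeffsum[OF this, of m s]
    show "smult (\<Sum>k\<le>r. c k * d k (r-k)) ([:0,1:] ^ (n - 2*r)) = smult (if r = 0 then 1 else 0) ([:0,1:] ^ (n - 2*r))"
      unfolding c_def d_def cs ..
  qed
  also have "\<dots> = [:0,1:] ^ n"
    by (simp add: sum.atMost_shift del: sum.atMost_Suc) 
  finally show ?thesis unfolding h_def c_def by simp
qed

lemma lin_sum:
  assumes "\<forall>p q. L (p + q) = L p + L q"
  shows "L (\<Sum>k\<in>A. f k) = (\<Sum>k\<in>A. (L (f k) :: 'b::ab_group_add))"
proof (induction A rule: infinite_finite_induct)
  case (infinite A)
  have "L 0 = L (0+0)" by simp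
  also have "\<dots> = L 0 + L 0" using assms by blast
  finally have "L 0 = 0" by simp
  then show ?case using infinite by simp
next
  case empty
  have "L 0 = L (0+0)" by simp
  also have "\<dots> = L 0 + L 0" using assms by blast
  finally have "L 0 = 0" by simp
  then show ?case by simp
next
  case (insert x F)
  then show ?case using assms by simp
qed

theorem mainTheorem4:
  fixes s :: "'a::field_char_0" and m :: nat
  shows "(\<forall>n. [:0, 1:] ^ n =
            (\<Sum>k\<le>n div 2.
               smult (fact n / (fact k * fact (n - 2*k)) * (fact (n + m - 2*k) / fact (n + m - k))
                      * (- s) ^ k)
                     (lpoly (n - 2*k) m s)))
       \<and> (\<forall>\<Lambda> :: 'a poly \<Rightarrow> 'a.
            (\<forall>p q. \<Lambda> (p + q) = \<Lambda> p + \<Lambda> q) \<and>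
            (\<forall>c p. \<Lambda> (smult c p) = c * \<Lambda> p) \<and>
            (\<forall>n. \<Lambda> (lpoly n m s) = (if n = 0 then 1 else 0))
            \<longrightarrow> (\<forall>n. \<Lambda> ([:0, 1:] ^ (2*n+1)) = 0 \<and>
                      \<Lambda> ([:0, 1:] ^ (2*n)) = (- s) ^ n * sigma m n))"
proof (intro conjI allI impI)
  fix n show "[:0, 1:] ^ n =
            (\<Sum>k\<le>n div 2.
               smult (fact n / (fact k * fact (n - 2*k)) * (fact (n + m - 2*k) / fact (n + m - k))
                      * (- s) ^ k)
                     (lpoly (n - 2*k) m s))" by (rule part1)
next
  fix \<Lambda> :: "'a poly \<Rightarrow> 'a" and n
  assume H: "(\<forall>p q. \<Lambda> (p + q) = \<Lambda> p + \<Lambda> q) \<and>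
            (\<forall>c p. \<Lambda> (smult c p) = c * \<Lambda> p) \<and>
            (\<forall>n. \<Lambda> (lpoly n m s) = (if n = 0 then 1 else 0))"
  define c where "c N k = (fact N / (fact k * fact (N - 2*k)) * (fact (N + m - 2*k) / fact (N + m - k)) * (- s) ^ k :: 'a)" for N k
  have L: "\<Lambda> ([:0,1:] ^ N) = (\<Sum>k\<le>N div 2. c N k * (if N - 2*k = 0 then 1 else 0))" for N
  proof -
    have "\<Lambda> ([:0,1:] ^ N) = \<Lambda> (\<Sum>k\<le>N div 2. smult (c N k) (lpoly (N - 2*k) m s))"
      using part1[of N m s] unfolding c_def by simp
    also have "\<dots> = (\<Sum>k\<le>N div 2. \<Lambda> (smult (c N k) (lpoly (N - 2*k) m s)))"
      by (rule lin_sum) (use H in blast)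
    also have "\<dots> = (\<Sum>k\<le>N div 2. c N k * (if N - 2*k = 0 then 1 else 0))"
      using H by simp
    finally show ?thesis .
  qed
  show "\<Lambda> ([:0, 1:] ^ (2*n+1)) = 0"
    unfolding L by (rule sum.neutral) auto
  have "\<Lambda> ([:0, 1:] ^ (2*n)) = (\<Sum>k\<le>n. if k = n then c (2*n) k else 0)"
    unfolding L by (rule sum.cong) auto
  also have "\<dots> = c (2*n) n" by simp
  also have "\<dots> = (- s) ^ n * sigma m n"
    unfolding c_def sigma_def by (simp add: field_simps add.commute)
  finally show "\<Lambda> ([:0, 1:] ^ (2*n)) = (- s) ^ n * sigma m n" .
qed

end
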